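(* Let $\mathbf{A}\in\mathbb{R}^{n\times d}$ have columns normalized so that $\mathrm{diag}(\mathbf{A}^T\mathbf{A})=\mathbf{1}$, let $\mathbf{y}\in\mathbb{R}^n$, $\lambda\ge 0$, and let $\hat{\mathbf{A}}=[\mathbf{A},\,-\mathbf{A}]\in\mathbb{R}^{n\times 2d}$. Consider the (duplicated-feature) Lasso objective $$F(\mathbf{x})=\tfrac12\lVert \hat{\mathbf{A}}\mathbf{x}-\mathbf{y}\rVert_2^2+\lambda\sum_{j=1}^{2d}x_j,\qquad \mathbf{x}\in\mathbb{R}^{2d}_+.$$ Fix $\mathbf{x}\in\mathbb{R}^{2d}_+$ and an integer $P\ge1$. Let $\mathcal{P}_t=\{i_1,\dots,i_P\}$ be a multiset of indices in $\{1,\dots,2d\}$ (as chosen in one iteration of Shotgun), for each $j$ let $\delta x_j=\max\{-x_j,\,-(\nabla F(\mathbf{x}))_j\}$ (the Shooting update with $\beta=1$), and let $\Delta\mathbf{x}\in\mathbb{R}^{2d}$ be the collective update $(\Delta\mathbf{x})_k=\sum_{i_j\in\mathcal{P}_t:\,i_j=k}\delta x_{i_j}$. Then $$F(\mathbf{x}+\Delta\mathbf{x})-F(\mathbf{x})\le -\tfrac12\sum_{i_j\in\mathcal{P}_t}(\delta x_{i_j})^2+\tfrac12\sum_{\substack{i_j,i_k\in\mathcal{P}_t\\ j\ne k}}(\hat{\mathbf{A}}^T\hat{\mathbf{A}})_{i_j,i_k}\,\delta x_{i_j}\,\delta x_{i_k}.$$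
   Context: Shotgun (parallel stochastic coordinate descent) starts at $\mathbf{x}=\mathbf{0}\in\mathbb{R}^{2d}_+$ and in each iteration chooses $P$ indices $i_1,\dots,i_P$ independently and uniformly at random from $\{1,\dots,2d\}$ (forming a multiset $\mathcal{P}_t$), computes for each chosen index $j$ the update $\delta x_j=\max\{-x_j,-(\nabla F(\mathbf{x}))_j/\beta\}$ at the current $\mathbf{x}$, and applies all of them simultaneously, giving the collective update $\Delta\mathbf{x}$. For the Lasso $\beta=1$. The matrix written $\mathbf{A}^T\mathbf{A}$ in the paper's statement is the Gram matrix of the (duplicated) design matrix indexing the $2d$ coordinates, here $\hat{\mathbf{A}}^T\hat{\mathbf{A}}$. *)

theory Defs
  imports Main "HOL-Analysis.Analysis"
begin

text \<open>Matrices are functions nat => nat => real with explicit bounds.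
  A is n x d (rows i < n, columns j < d); coordinates of R^{2d} are indices 0..2d-1.\<close>

definition Ahat :: "(nat \<Rightarrow> nat \<Rightarrow> real) \<Rightarrow> nat \<Rightarrow> nat \<Rightarrow> nat \<Rightarrow> real" where
  "Ahat A d i j = (if j < d then A i j else - A i (j - d))"

definition lasso_F :: "(nat \<Rightarrow> nat \<Rightarrow> real) \<Rightarrow> (nat \<Rightarrow> real) \<Rightarrow> real \<Rightarrow> nat \<Rightarrow> nat
    \<Rightarrow> (nat \<Rightarrow> real) \<Rightarrow> real" where
  "lasso_F A y lam n d x =
     (1/2) * (\<Sum>i<n. ((\<Sum>j<2*d. Ahat A d i j * x j) - y i)\<^sup>2) + lam * (\<Sum>j<2*d. x j)"

definition lasso_grad :: "(nat \<Rightarrow> nat \<Rightarrow> real) \<Rightarrow> (nat \<Rightarrow> real) \<Rightarrow> real \<Rightarrow> nat \<Rightarrow> nat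
    \<Rightarrow> (nat \<Rightarrow> real) \<Rightarrow> nat \<Rightarrow> real" where
  "lasso_grad A y lam n d x j =
     (\<Sum>i<n. Ahat A d i j * ((\<Sum>k<2*d. Ahat A d i k * x k) - y i)) + lam"

definition gram :: "(nat \<Rightarrow> nat \<Rightarrow> real) \<Rightarrow> nat \<Rightarrow> nat \<Rightarrow> nat \<Rightarrow> nat \<Rightarrow> real" where
  "gram A n d j k = (\<Sum>i<n. Ahat A d i j * Ahat A d i k)"

definition shoot_delta :: "(nat \<Rightarrow> nat \<Rightarrow> real) \<Rightarrow> (nat \<Rightarrow> real) \<Rightarrow> real \<Rightarrow> nat \<Rightarrow> nat
    \<Rightarrow> (nat \<Rightarrow> real) \<Rightarrow> nat \<Rightarrow> real" where
  "shoot_delta A y lam n d x j = max (- x j) (- lasso_grad A y lam n d x j)"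

text \<open>Collective update for the selected index list I = [i_1,...,i_P] (a multiset with labels).\<close>
definition collective_update :: "nat list \<Rightarrow> (nat \<Rightarrow> real) \<Rightarrow> nat \<Rightarrow> real" where
  "collective_update I dx k = (\<Sum>j<length I. if I ! j = k then dx (I ! j) else 0)"

end

theory Submission
  imports Defs
begin

lemma coll_sum:
  assumes "\<forall>p<length I. I!p < m"
  shows "(\<Sum>j<m. f j * collective_update I dx j) = (\<Sum>p<length I. f (I!p) * dx (I!p))"
proof -
  have "(\<Sum>j<m. f j * collective_update I dx j)
      = (\<Sum>j<m. \<Sum>p<length I. (if I!p = j then f j * dx (I!p) else 0))"
    unfolding collective_update_def sum_distrib_left by (intro sum.cong) auto
  also have "\<dots> = (\<Sum>p<length I. \<Sum>j<m. (if I!p = j then f j * dx (I!p) else 0))"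
    by (rule sum.swap)
  also have "\<dots> = (\<Sum>p<length I. f (I!p) * dx (I!p))"
    using assms by (intro sum.cong) (auto simp: sum.delta)
  finally show ?thesis .
qed

lemma gram_diag:
  assumes "\<forall>j<d. (\<Sum>i<n. (A i j)\<^sup>2) = 1" "j < 2*d"
  shows "gram A n d j j = 1"
proof (cases "j < d")
  case True then show ?thesis using assms unfolding gram_def Ahat_def by (simp add: power2_eq_square)
next
  case False
  then have "j - d < d" using assms(2) by auto
  then show ?thesis using assms False unfolding gram_def Ahat_def by (simp add: power2_eq_square)
qed

lemma step_bound:
  fixes g xj :: real
  assumes "xj \<ge> 0"
  shows "g * max (- xj) (- g) \<le> - (max (- xj) (- g))\<^sup>2"
proof (cases "- xj \<le> - g")
  case True then have "max (- xj) (- g) = - g" by (simp add: max_def)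
  moreover have "g * - g = - (- g)\<^sup>2" by (simp add: power2_eq_square)
  ultimately show ?thesis by simp
next
  case False
  then have "g > xj" by simp
  then have "g * xj \<ge> xj * xj" using assms by (simp add: mult_right_mono)
  then show ?thesis using False by (simp add: max_def power2_eq_square)
qed

theorem theorem3p1:
  fixes A :: "nat \<Rightarrow> nat \<Rightarrow> real" and y x :: "nat \<Rightarrow> real" and lam :: real
    and n d P :: nat and I :: "nat list"
  assumes colnorm: "\<forall>j<d. (\<Sum>i<n. (A i j)\<^sup>2) = 1"
    and lam_nonneg: "lam \<ge> 0"
    and x_nonneg: "\<forall>j<2*d. x j \<ge> 0"
    and P_pos: "P \<ge> 1"
    and I_len: "length I = P"
    and I_range: "\<forall>j<P. I ! j < 2*d"
  shows "lasso_F A y lam n d (\<lambda>k. x k + collective_update I (shoot_delta A y lam n d x) k)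
           - lasso_F A y lam n d x
         \<le> - (1/2) * (\<Sum>j<P. (shoot_delta A y lam n d x (I ! j))\<^sup>2)
           + (1/2) * (\<Sum>j<P. \<Sum>k<P. if j \<noteq> k then
                gram A n d (I ! j) (I ! k) * shoot_delta A y lam n d x (I ! j)
                  * shoot_delta A y lam n d x (I ! k) else 0)"
proof -
  define \<delta> where "\<delta> = shoot_delta A y lam n d x"
  define D where "D = collective_update I \<delta>"
  define r where "r i = (\<Sum>j<2*d. Ahat A d i j * x j) - y i" for i
  define u where "u i = (\<Sum>j<2*d. Ahat A d i j * D j)" for i
  define g where "g = lasso_grad A y lam n d x"
  define G where "G = gram A n d"
  have rng: "\<forall>p<length I. I!p < 2*d" using I_range I_len by simp
  have u_eq: "u i = (\<Sum>p<P. Ahat A d i (I!p) * \<delta> (I!p))" for i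
    unfolding u_def D_def using coll_sum[OF rng] I_len by simp
  have D_sum: "(\<Sum>j<2*d. D j) = (\<Sum>p<P. \<delta> (I!p))"
    using coll_sum[OF rng, of "\<lambda>_. 1" \<delta>] I_len unfolding D_def by simp
  have g_eq: "g j = (\<Sum>i<n. Ahat A d i j * r i) + lam" for j
    unfolding g_def lasso_grad_def r_def by simp
  have Fnew: "lasso_F A y lam n d (\<lambda>k. x k + D k)
      = (1/2) * (\<Sum>i<n. (r i + u i)\<^sup>2) + lam * ((\<Sum>j<2*d. x j) + (\<Sum>j<2*d. D j))"
  proof -
    have "(\<Sum>j<2*d. Ahat A d i j * (x j + D j)) - y i = r i + u i" for i
      unfolding r_def u_def by (simp add: distrib_left sum.distrib)
    then show ?thesis unfolding lasso_F_def by (simp add: sum.distrib)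
  qed
  have Fold: "lasso_F A y lam n d x = (1/2) * (\<Sum>i<n. (r i)\<^sup>2) + lam * (\<Sum>j<2*d. x j)"
    unfolding lasso_F_def r_def by simp
  have diff: "lasso_F A y lam n d (\<lambda>k. x k + D k) - lasso_F A y lam n d x
      = (\<Sum>i<n. r i * u i) + lam * (\<Sum>j<2*d. D j) + (1/2) * (\<Sum>i<n. (u i)\<^sup>2)"
    unfolding Fnew Fold
    by (simp add: power2_eq_square algebra_simps sum.distrib sum_distrib_left sum_subtractf)
  have lin: "(\<Sum>i<n. r i * u i) + lam * (\<Sum>j<2*d. D j) = (\<Sum>p<P. g (I!p) * \<delta> (I!p))"
  proof -
    have "(\<Sum>i<n. r i * u i) = (\<Sum>i<n. \<Sum>p<P. r i * Ahat A d i (I!p) * \<delta> (I!p))"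
      unfolding u_eq by (simp add: sum_distrib_left mult.assoc)
    also have "\<dots> = (\<Sum>p<P. \<Sum>i<n. r i * Ahat A d i (I!p) * \<delta> (I!p))" by (rule sum.swap)
    also have "\<dots> = (\<Sum>p<P. (\<Sum>i<n. Ahat A d i (I!p) * r i) * \<delta> (I!p))"
      by (intro sum.cong refl) (simp add: sum_distrib_left mult_ac)
    moreover have "lam * (\<Sum>j<2*d. D j) = (\<Sum>p<P. lam * \<delta> (I!p))"
      unfolding D_sum by (simp add: sum_distrib_left)
    moreover have "(\<Sum>p<P. g (I!p) * \<delta> (I!p)) = (\<Sum>p<P. (\<Sum>i<n. Ahat A d i (I!p) * r i) * \<delta> (I!p) + lam * \<delta> (I!p))"
      unfolding g_eq by (intro sum.cong refl) (simp add: distrib_right)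
    ultimately show ?thesis by (simp add: sum.distrib)
  qed
  have quad: "(\<Sum>i<n. (u i)\<^sup>2) = (\<Sum>p<P. \<Sum>q<P. G (I!p) (I!q) * \<delta> (I!p) * \<delta> (I!q))"
  proof -
    have "(\<Sum>i<n. (u i)\<^sup>2) = (\<Sum>i<n. \<Sum>p<P. \<Sum>q<P.
          Ahat A d i (I!p) * Ahat A d i (I!q) * \<delta> (I!p) * \<delta> (I!q))"
      unfolding u_eq power2_eq_square sum_product by (simp add: algebra_simps)
    also have "\<dots> = (\<Sum>p<P. \<Sum>i<n. \<Sum>q<P.
          Ahat A d i (I!p) * Ahat A d i (I!q) * \<delta> (I!p) * \<delta> (I!q))" by (rule sum.swap)
    also have "\<dots> = (\<Sum>p<P. \<Sum>q<P. \<Sum>i<n.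
          Ahat A d i (I!p) * Ahat A d i (I!q) * \<delta> (I!p) * \<delta> (I!q))"
      by (rule sum.cong[OF refl], rule sum.swap)
    also have "\<dots> = (\<Sum>p<P. \<Sum>q<P. G (I!p) (I!q) * \<delta> (I!p) * \<delta> (I!q))"
      unfolding G_def gram_def by (simp add: sum_distrib_right)
    finally show ?thesis .
  qed
  have split: "(\<Sum>p<P. \<Sum>q<P. G (I!p) (I!q) * \<delta> (I!p) * \<delta> (I!q))
      = (\<Sum>p<P. (\<delta> (I!p))\<^sup>2) + (\<Sum>p<P. \<Sum>q<P. if p \<noteq> q then
            G (I!p) (I!q) * \<delta> (I!p) * \<delta> (I!q) else 0)"
  proof -
    have "(\<Sum>q<P. G (I!p) (I!q) * \<delta> (I!p) * \<delta> (I!q))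
       = (\<delta> (I!p))\<^sup>2 + (\<Sum>q<P. if p \<noteq> q then G (I!p) (I!q) * \<delta> (I!p) * \<delta> (I!q) else 0)"
      if "p < P" for p
    proof -
      have "(\<Sum>q<P. G (I!p) (I!q) * \<delta> (I!p) * \<delta> (I!q))
        = (\<Sum>q<P. (if p = q then G (I!p) (I!q) * \<delta> (I!p) * \<delta> (I!q) else 0)
             + (if p \<noteq> q then G (I!p) (I!q) * \<delta> (I!p) * \<delta> (I!q) else 0))"
        by (intro sum.cong) auto
      also have "\<dots> = G (I!p) (I!p) * \<delta> (I!p) * \<delta> (I!p)
          + (\<Sum>q<P. if p \<noteq> q then G (I!p) (I!q) * \<delta> (I!p) * \<delta> (I!q) else 0)"
        using that by (simp add: sum.distrib)
      also have "G (I!p) (I!p) = 1" unfolding G_def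
        using gram_diag[OF colnorm] I_range that by simp
      finally show ?thesis by (simp add: power2_eq_square)
    qed
    then show ?thesis by (simp add: sum.distrib)
  qed
  have bound: "(\<Sum>p<P. g (I!p) * \<delta> (I!p)) \<le> (\<Sum>p<P. - (\<delta> (I!p))\<^sup>2)"
  proof (rule sum_mono)
    fix p assume "p \<in> {..<P}"
    then have "x (I!p) \<ge> 0" using x_nonneg I_range by auto
    then show "g (I!p) * \<delta> (I!p) \<le> - (\<delta> (I!p))\<^sup>2"
      unfolding \<delta>_def shoot_delta_def g_def by (rule step_bound)
  qed
  have "lasso_F A y lam n d (\<lambda>k. x k + D k) - lasso_F A y lam n d x
      = (\<Sum>p<P. g (I!p) * \<delta> (I!p)) + (1/2) * ((\<Sum>p<P. (\<delta> (I!p))\<^sup>2) + (\<Sum>p<P. \<Sum>q<P. if p \<noteq> q then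
            G (I!p) (I!q) * \<delta> (I!p) * \<delta> (I!q) else 0))"
    unfolding diff lin quad split ..
  also have "\<dots> \<le> - (1/2) * (\<Sum>p<P. (\<delta> (I!p))\<^sup>2) + (1/2) * (\<Sum>p<P. \<Sum>q<P. if p \<noteq> q then
            G (I!p) (I!q) * \<delta> (I!p) * \<delta> (I!q) else 0)"
    using bound by (simp add: sum_negf algebra_simps)
  finally show ?thesis unfolding \<delta>_def D_def G_def .
qed

end
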